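(* Assume inhibitory coupling ($\varepsilon_{ij}\le0$ for all $i,j$ and $\varepsilon<0$). Let $\boldsymbol\delta\in\mathbb R^N$ with $\delta_i\ge0$ for all $i$, and suppose $\boldsymbol\delta$ is not a multiple of $(1,\dots,1)^{\mathsf T}$. Put - $\delta_M=\max_i\delta_i$; - $\delta_m=\max\{\delta_i:\delta_i<\delta_M\}$; - $\mathbb M=\{j:\delta_j=\delta_M\}$. Then for every ordering $\mathcal O$ and every $i$, $$(A(\mathcal O)\boldsymbol\delta)_i\le\delta_M-(\delta_M-\delta_m)\sum_{j\notin\mathbb M}A_{ij}(\mathcal O),$$ and $A(\mathcal O)\boldsymbol\delta$ has nonnegative components. In particular: - if there is no $i$ with $\mathrm{Pre}(i)\cup\{i\}\subseteq\mathbb M$, then $\max_i(A(\mathcal O)\boldsymbol\delta)_i<\delta_M$; - if such an $i$ exists, then $\max_i(A(\mathcal O)\boldsymbol\delta)_i=\delta_M$.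
   Context: Let $U$ be a twice continuously differentiable, strictly increasing function on an interval $I\subseteq\mathbb R$ containing $(-\infty,1]$. Assume $U'>0$ and $U''<0$ on $I$, $U(0)=0$ and $U(1)=1$. Fix $N\ge 2$ and a delay $\tau\in(0,1)$. For each $i$ fix a nonempty set $\mathrm{Pre}(i)\subseteq\{1,\dots,N\}\setminus\{i\}$ and put $k_i=|\mathrm{Pre}(i)|$. Fix real couplings $\varepsilon_{ij}$ with $\varepsilon_{ij}\neq0$ if and only if $j\in\mathrm{Pre}(i)$, normalized so that $\sum_j\varepsilon_{ij}=\varepsilon$ for every $i$. An ordering $\mathcal O$ is a choice, for each $i$, of an enumeration $j_1(i),\dots,j_{k_i}(i)$ of $\mathrm{Pre}(i)$. For $n\in\{0,\dots,k_i\}$ define $$p_{i,n}=\frac{U'\Big(U^{-1}\big(U(\tau)+\sum_{m=1}^{n}\varepsilon_{ij_m(i)}\big)\Big)}{U'\big(U^{-1}(U(\tau)+\varepsilon)\big)}.$$ The stability matrix $A(\mathcal O)$ has entries - $A_{ii}=p_{i,0}$; - $A_{ij}=p_{i,n}-p_{i,n-1}$ if $j=j_n(i)$; - $A_{ij}=0$ if $j\notin\mathrm{Pre}(i)\cup\{i\}$. *)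

theory Defs
  imports "HOL-Analysis.Analysis"
begin

text \<open>Indices are 1..N. Uinv is the inverse of U on the interval I (inv_into I U).
  ord i m is the m-th predecessor j_m(i) in the ordering, for m in 1..k_i.\<close>

definition pcoef :: "real set \<Rightarrow> (real \<Rightarrow> real) \<Rightarrow> (real \<Rightarrow> real) \<Rightarrow> real \<Rightarrow> real
    \<Rightarrow> (nat \<Rightarrow> nat \<Rightarrow> real) \<Rightarrow> (nat \<Rightarrow> nat \<Rightarrow> nat) \<Rightarrow> nat \<Rightarrow> nat \<Rightarrow> real" where
  "pcoef I U U' \<tau> eps \<epsilon> ord i n =
     U' (inv_into I U (U \<tau> + (\<Sum>m = 1..n. \<epsilon> i (ord i m))))
       / U' (inv_into I U (U \<tau> + eps))"

definition stabA :: "real set \<Rightarrow> (real \<Rightarrow> real) \<Rightarrow> (real \<Rightarrow> real) \<Rightarrow> real \<Rightarrow> real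
    \<Rightarrow> (nat \<Rightarrow> nat \<Rightarrow> real) \<Rightarrow> (nat \<Rightarrow> nat set) \<Rightarrow> (nat \<Rightarrow> nat \<Rightarrow> nat) \<Rightarrow> nat \<Rightarrow> nat \<Rightarrow> real" where
  "stabA I U U' \<tau> eps \<epsilon> Pre ord i j =
     (if j = i then pcoef I U U' \<tau> eps \<epsilon> ord i 0
      else if j \<in> Pre i then
        (let n = (THE n. n \<in> {1..card (Pre i)} \<and> ord i n = j) in
           pcoef I U U' \<tau> eps \<epsilon> ord i n - pcoef I U U' \<tau> eps \<epsilon> ord i (n - 1))
      else 0)"

end

theory Submission
  imports Defs
begin



lemma anal:
  fixes U U' U'' :: "real \<Rightarrow> real" and I :: "real set" and \<tau> :: real
  assumes I_sup: "{..1} \<subseteq> I"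
    and U_d1: "\<And>x. x \<in> I \<Longrightarrow> (U has_real_derivative U' x) (at x within I)"
    and U_d2: "\<And>x. x \<in> I \<Longrightarrow> (U' has_real_derivative U'' x) (at x within I)"
    and U_mono: "strict_mono_on I U"
    and U'_pos: "\<And>x. x \<in> I \<Longrightarrow> U' x > 0"
    and U''_neg: "\<And>x. x \<in> I \<Longrightarrow> U'' x < 0"
    and U0: "U 0 = 0" and tau: "0 < \<tau>" "\<tau> < 1"
  shows "\<And>v. v \<le> U \<tau> \<Longrightarrow> inv_into I U v \<in> I \<and> inv_into I U v \<le> \<tau> \<and> U (inv_into I U v) = v"
    and "\<And>v1 v2. v1 < v2 \<Longrightarrow> v2 \<le> U \<tau> \<Longrightarrow> U' (inv_into I U v2) < U' (inv_into I U v1)"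
proof -
  have sub1: "{..<(1::real)} \<subseteq> I" using I_sup by auto
  have dU: "(U has_real_derivative U' x) (at x)" if "x < 1" for x
  proof -
    have xI: "x \<in> I" using I_sup that by auto
    have "(U has_real_derivative U' x) (at x within {..<1})"
      using DERIV_subset[OF U_d1[OF xI] sub1] .
    thus ?thesis using at_within_open[of x "{..<1}"] that by simp
  qed
  have dU': "(U' has_real_derivative U'' x) (at x)" if "x < 1" for x
  proof -
    have xI: "x \<in> I" using I_sup that by auto
    have "(U' has_real_derivative U'' x) (at x within {..<1})"
      using DERIV_subset[OF U_d2[OF xI] sub1] .
    thus ?thesis using at_within_open[of x "{..<1}"] that by simp
  qed
  have U'dec: "U' y < U' x" if "x < y" "y < 1" for x y
  proof -
    have "\<exists>d. DERIV U' z :> d \<and> d < 0" if "x \<le> z" "z \<le> y" for z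
    proof -
      have "z < 1" using that \<open>y<1\<close> by simp
      hence "z \<in> I" using I_sup by auto
      thus ?thesis using dU'[OF \<open>z<1\<close>] U''_neg by blast
    qed
    thus ?thesis using DERIV_neg_imp_decreasing[OF \<open>x<y\<close>] by blast
  qed
  have U'0: "U' 0 > 0" using U'_pos I_sup by (meson atMost_iff subsetD zero_less_one less_imp_le)
  have Ulin: "U x \<le> U' 0 * x" if "x \<le> 0" for x
  proof (cases "x = 0")
    case True thus ?thesis using U0 by simp
  next
    case False
    hence "x < 0" using that by simp
    obtain z where z: "x < z" "z < 0" "U 0 - U x = (0 - x) * U' z"
      using MVT2[OF \<open>x<0\<close>, of U U'] dU by force
    have "U' 0 < U' z" using U'dec[OF z(2)] by simp
    hence "x * (U' z - U' 0) \<le> 0" using \<open>x<0\<close> by (simp add: mult_nonpos_nonneg)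
    thus ?thesis using z(3) U0 by (simp add: algebra_simps)
  qed
  have inj: "inj_on U I" using strict_mono_on_imp_inj_on[OF U_mono] .
  show inv: "inv_into I U v \<in> I \<and> inv_into I U v \<le> \<tau> \<and> U (inv_into I U v) = v" if "v \<le> U \<tau>" for v
  proof -
    define a where "a = min 0 (v / U' 0)"
    have a0: "a \<le> 0" unfolding a_def by simp
    have Ua: "U a \<le> v"
    proof (cases "v / U' 0 \<le> 0")
      case True
      hence "a = v / U' 0" unfolding a_def by simp
      thus ?thesis using Ulin[OF a0] U'0 by simp
    next
      case False
      hence "a = 0" "v \<ge> 0" unfolding a_def using U'0 by (auto simp: divide_simps split: if_splits)
      thus ?thesis using U0 by simp
    qed
    have cont: "continuous_on {a..\<tau>} U"
    proof (intro continuous_at_imp_continuous_on ballI)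
      fix x assume "x \<in> {a..\<tau>}"
      hence "x < 1" using tau by auto
      thus "isCont U x" using DERIV_isCont[OF dU] by blast
    qed
    obtain x where x: "a \<le> x" "x \<le> \<tau>" "U x = v"
      using IVT'[of U a v \<tau>, OF Ua \<open>v \<le> U \<tau>\<close> _ cont] a0 tau by auto
    have xI: "x \<in> I" using x tau I_sup by auto
    have "inv_into I U v = x" using inv_into_f_eq[OF inj xI x(3)] .
    thus ?thesis using x xI by simp
  qed
  show "U' (inv_into I U v2) < U' (inv_into I U v1)" if "v1 < v2" "v2 \<le> U \<tau>" for v1 v2
  proof -
    have i1: "inv_into I U v1 \<in> I \<and> inv_into I U v1 \<le> \<tau> \<and> U (inv_into I U v1) = v1"
      using inv that by simp
    have i2: "inv_into I U v2 \<in> I \<and> inv_into I U v2 \<le> \<tau> \<and> U (inv_into I U v2) = v2"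
      using inv that by simp
    have "inv_into I U v1 < inv_into I U v2"
    proof (rule ccontr)
      assume "\<not> ?thesis"
      hence "inv_into I U v2 < inv_into I U v1 \<or> inv_into I U v2 = inv_into I U v1" by auto
      thus False
        using strict_mono_onD[OF U_mono, of "inv_into I U v2" "inv_into I U v1"] i1 i2 that by auto
    qed
    thus ?thesis using U'dec i2 tau by simp
  qed
qed


lemma tele: fixes f :: "nat \<Rightarrow> real" and n :: nat shows "(\<Sum>m=1..n. f m - f (m-1)) = f n - (f 0 :: real)"
  by (induction n) (auto simp: sum.atLeast1_atMost_eq)

theorem mainTheorem6:
  fixes U U' U'' :: "real \<Rightarrow> real" and I :: "real set"
    and N :: nat and \<tau> eps :: real
    and Pre :: "nat \<Rightarrow> nat set" and \<epsilon> :: "nat \<Rightarrow> nat \<Rightarrow> real"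
    and ord :: "nat \<Rightarrow> nat \<Rightarrow> nat" and \<delta> :: "nat \<Rightarrow> real"
  assumes I_int: "is_interval I" and I_sup: "{..1} \<subseteq> I"
    and U_d1: "\<And>x. x \<in> I \<Longrightarrow> (U has_real_derivative U' x) (at x within I)"
    and U_d2: "\<And>x. x \<in> I \<Longrightarrow> (U' has_real_derivative U'' x) (at x within I)"
    and U''_cont: "continuous_on I U''"
    and U_mono: "strict_mono_on I U"
    and U'_pos: "\<And>x. x \<in> I \<Longrightarrow> U' x > 0"
    and U''_neg: "\<And>x. x \<in> I \<Longrightarrow> U'' x < 0"
    and U0: "U 0 = 0" and U1: "U 1 = 1"
    and N2: "N \<ge> 2" and tau: "0 < \<tau>" "\<tau> < 1"
    and Pre_sub: "\<And>i. i \<in> {1..N} \<Longrightarrow> Pre i \<subseteq> {1..N} - {i}"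
    and Pre_ne: "\<And>i. i \<in> {1..N} \<Longrightarrow> Pre i \<noteq> {}"
    and eps_supp: "\<And>i j. i \<in> {1..N} \<Longrightarrow> j \<in> {1..N} \<Longrightarrow> (\<epsilon> i j \<noteq> 0 \<longleftrightarrow> j \<in> Pre i)"
    and eps_sum: "\<And>i. i \<in> {1..N} \<Longrightarrow> (\<Sum>j\<in>{1..N}. \<epsilon> i j) = eps"
    and inhib: "\<And>i j. i \<in> {1..N} \<Longrightarrow> j \<in> {1..N} \<Longrightarrow> \<epsilon> i j \<le> 0" and eps_neg: "eps < 0"
    and ordering: "\<And>i. i \<in> {1..N} \<Longrightarrow> bij_betw (ord i) {1..card (Pre i)} (Pre i)"
    and delta_nn: "\<And>i. i \<in> {1..N} \<Longrightarrow> \<delta> i \<ge> 0"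
    and delta_nc: "\<not> (\<exists>c. \<forall>i\<in>{1..N}. \<delta> i = c)"
  shows "let A = stabA I U U' \<tau> eps \<epsilon> Pre ord;
             A\<delta> = (\<lambda>i. \<Sum>j\<in>{1..N}. A i j * \<delta> j);
             \<delta>M = Max (\<delta> ` {1..N});
             \<delta>m = Max {\<delta> i | i. i \<in> {1..N} \<and> \<delta> i < \<delta>M};
             MM = {j \<in> {1..N}. \<delta> j = \<delta>M}
         in (\<forall>i\<in>{1..N}. A\<delta> i \<le> \<delta>M - (\<delta>M - \<delta>m) * (\<Sum>j\<in>{1..N} - MM. A i j))
          \<and> (\<forall>i\<in>{1..N}. A\<delta> i \<ge> 0)
          \<and> ((\<nexists>i. i \<in> {1..N} \<and> Pre i \<union> {i} \<subseteq> MM) \<longrightarrow> Max (A\<delta> ` {1..N}) < \<delta>M)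
          \<and> ((\<exists>i. i \<in> {1..N} \<and> Pre i \<union> {i} \<subseteq> MM) \<longrightarrow> Max (A\<delta> ` {1..N}) = \<delta>M)"
proof -
  have an1: "inv_into I U v \<in> I" if "v \<le> U \<tau>" for v
    using anal(1)[of I U U' U'' \<tau> v] I_sup U_d1 U_d2 U_mono U'_pos U''_neg U0 tau that by blast
  have an2: "U' (inv_into I U v2) < U' (inv_into I U v1)" if "v1 < v2" "v2 \<le> U \<tau>" for v1 v2
    using anal(2)[of I U U' U'' \<tau> v1 v2] I_sup U_d1 U_d2 U_mono U'_pos U''_neg U0 tau that by blast
  define h where "h v = U' (inv_into I U v)" for v
  have hpos: "h v > 0" if "v \<le> U \<tau>" for v using an1[OF that] U'_pos unfolding h_def by blast
  have hdec: "h v2 < h v1" if "v1 < v2" "v2 \<le> U \<tau>" for v1 v2 using an2[OF that] unfolding h_def .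
  define S where "S i n = (\<Sum>m = 1..n. \<epsilon> i (ord i m))" for i n
  define p where "p i n = pcoef I U U' \<tau> eps \<epsilon> ord i n" for i n
  have p_eq: "p i n = h (U \<tau> + S i n) / h (U \<tau> + eps)" for i n
    unfolding p_def pcoef_def h_def S_def by simp
  define A where "A = stabA I U U' \<tau> eps \<epsilon> Pre ord"
  have D: "h (U \<tau> + eps) > 0" using hpos eps_neg by simp
  have row: "(\<forall>j. A i j \<ge> 0) \<and> (\<forall>j \<in> Pre i \<union> {i}. A i j > 0)
     \<and> (\<forall>j. j \<notin> Pre i \<union> {i} \<longrightarrow> A i j = 0) \<and> (\<Sum>j\<in>{1..N}. A i j) = 1"
    if iN: "i \<in> {1..N}" for i
  proof -
    define k where "k = card (Pre i)"
    have fin: "finite (Pre i)" using Pre_sub[OF iN] finite_subset by blast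
    have k1: "k \<ge> 1" using Pre_ne[OF iN] fin k_def by (simp add: Suc_le_eq card_gt_0_iff)
    have bij: "bij_betw (ord i) {1..k} (Pre i)" using ordering[OF iN] k_def by simp
    have ordP: "ord i m \<in> Pre i" if "m \<in> {1..k}" for m using bij that bij_betwE by blast
    have ordN: "ord i m \<in> {1..N}" if "m \<in> {1..k}" for m using ordP[OF that] Pre_sub[OF iN] by blast
    have ordi: "ord i m \<noteq> i" if "m \<in> {1..k}" for m using ordP[OF that] Pre_sub[OF iN] by blast
    have epsneg: "\<epsilon> i (ord i m) < 0" if "m \<in> {1..k}" for m
      using eps_supp[OF iN ordN[OF that]] inhib[OF iN ordN[OF that]] ordP[OF that] by fastforce
    have Sstep: "S i m = S i (m-1) + \<epsilon> i (ord i m)" if "m \<ge> 1" for m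
      using that unfolding S_def by (cases m) auto
    have Sle0: "S i n \<le> 0" if "n \<le> k" for n
      unfolding S_def using epsneg that by (intro sum_nonpos) (simp add: less_imp_le)
    have Sk: "S i k = eps"
    proof -
      have "S i k = (\<Sum>j\<in>Pre i. \<epsilon> i j)" unfolding S_def using sum.reindex_bij_betw[OF bij, of "\<epsilon> i"] by simp
      also have "\<dots> = (\<Sum>j\<in>{1..N}. \<epsilon> i j)"
        apply (rule sum.mono_neutral_left) using Pre_sub[OF iN] eps_supp[OF iN] by (auto, metis atLeastAtMost_iff)
      also have "\<dots> = eps" using eps_sum[OF iN] .
      finally show ?thesis .
    qed
    have Smono: "S i m \<le> S i n" if "n \<le> m" "m \<le> k" for n m
      using that
    proof (induction m)
      case 0 then show ?case by simp
    next
      case (Suc m)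
      show ?case
      proof (cases "n = Suc m")
        case True then show ?thesis by simp
      next
        case False
        hence "n \<le> m" using Suc.prems by simp
        hence "S i m \<le> S i n" using Suc by simp
        moreover have "\<epsilon> i (ord i (Suc m)) < 0" using epsneg Suc.prems by simp
        moreover have "S i (Suc m) = S i m + \<epsilon> i (ord i (Suc m))" unfolding S_def by simp
        ultimately show ?thesis by simp
      qed
    qed
    have Sge: "S i n \<ge> eps" if "n \<le> k" for n using Smono[OF that order_refl] Sk by simp
    have ppos: "p i n > 0" if "n \<le> k" for n
      unfolding p_eq using hpos[of "U \<tau> + S i n"] Sle0[OF that] D by simp
    have pk: "p i k = 1" unfolding p_eq Sk using D by simp
    have pinc: "p i (m-1) < p i m" if "m \<in> {1..k}" for m
    proof -
      have "S i m < S i (m-1)" using Sstep[of m] epsneg[OF that] that by simp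
      moreover have "m-1 \<le> k" using that by auto
      hence "S i (m-1) \<le> 0" by (rule Sle0)
      ultimately have "h (U \<tau> + S i (m-1)) < h (U \<tau> + S i m)" by (intro hdec) auto
      thus ?thesis unfolding p_eq using D by (simp add: divide_strict_right_mono)
    qed
    have Aii: "A i i = p i 0" unfolding A_def stabA_def p_def by simp
    have Aord: "A i (ord i m) = p i m - p i (m-1)" if m: "m \<in> {1..k}" for m
    proof -
      have inj: "inj_on (ord i) {1..k}" using bij bij_betw_imp_inj_on by blast
      have "(THE n. n \<in> {1..card (Pre i)} \<and> ord i n = ord i m) = m"
        unfolding k_def[symmetric]
        apply (rule the_equality) using m inj inj_onD by fastforce+
      thus ?thesis unfolding A_def stabA_def p_def Let_def using ordi[OF m] ordP[OF m] by simp
    qed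
    have Aoth: "A i j = 0" if "j \<notin> Pre i \<union> {i}" for j using that unfolding A_def stabA_def by auto
    have surj: "ord i ` {1..k} = Pre i" using bij bij_betw_imp_surj_on by blast
    have Apos: "\<forall>j \<in> Pre i \<union> {i}. A i j > 0"
    proof
      fix j assume "j \<in> Pre i \<union> {i}"
      then consider "j = i" | "j \<in> Pre i" by auto
      thus "A i j > 0"
      proof cases
        case 1 thus ?thesis using Aii ppos by simp
      next
        case 2 then obtain m where m: "m \<in> {1..k}" "j = ord i m" using surj by blast
        thus ?thesis using Aord[OF m(1)] pinc[OF m(1)] by simp
      qed
    qed
    have Ann: "\<forall>j. A i j \<ge> 0" using Apos Aoth by (metis less_imp_le order_refl)
    have iP: "i \<notin> Pre i" using Pre_sub[OF iN] by blast
    have "(\<Sum>j\<in>{1..N}. A i j) = (\<Sum>j\<in>insert i (Pre i). A i j)"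
      apply (rule sum.mono_neutral_right) using Pre_sub[OF iN] iN Aoth by auto
    also have "\<dots> = A i i + (\<Sum>j\<in>Pre i. A i j)" using fin iP by simp
    also have "(\<Sum>j\<in>Pre i. A i j) = (\<Sum>m\<in>{1..k}. A i (ord i m))"
      using sum.reindex_bij_betw[OF bij, of "A i"] by simp
    also have "\<dots> = (\<Sum>m=1..k. p i m - p i (m-1))" using Aord by simp
    also have "\<dots> = p i k - p i 0" by (rule tele)
    finally have "(\<Sum>j\<in>{1..N}. A i j) = 1" using Aii pk by simp
    thus ?thesis using Apos Ann Aoth by blast
  qed
  define A\<delta> where "A\<delta> = (\<lambda>i. \<Sum>j\<in>{1..N}. A i j * \<delta> j)"
  define \<delta>M where "\<delta>M = Max (\<delta> ` {1..N})"
  define L where "L = {\<delta> i | i. i \<in> {1..N} \<and> \<delta> i < \<delta>M}"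
  define \<delta>m where "\<delta>m = Max L"
  define MM where "MM = {j \<in> {1..N}. \<delta> j = \<delta>M}"
  have Nne: "{1..N} \<noteq> {}" using N2 by simp
  have dle: "\<delta> j \<le> \<delta>M" if "j \<in> {1..N}" for j unfolding \<delta>M_def using that by simp
  obtain j0 where j0: "j0 \<in> {1..N}" "\<delta> j0 \<noteq> \<delta>M" using delta_nc by blast
  have Lne: "L \<noteq> {}" unfolding L_def using j0 dle[OF j0(1)] by force
  have Lfin: "finite L" unfolding L_def by (rule finite_subset[of _ "\<delta> ` {1..N}"]) auto
  have dmlt: "\<delta>m < \<delta>M" using Max_in[OF Lfin Lne] unfolding \<delta>m_def L_def by auto
  have dmge: "\<delta> j \<le> \<delta>m" if "j \<in> {1..N}" "\<delta> j < \<delta>M" for j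
    unfolding \<delta>m_def using that Lfin by (intro Max_ge) (auto simp: L_def)
  have MMsub: "MM \<subseteq> {1..N}" unfolding MM_def by auto
  have c1: "A\<delta> i \<le> \<delta>M - (\<delta>M - \<delta>m) * (\<Sum>j\<in>{1..N} - MM. A i j)" if iN: "i \<in> {1..N}" for i
  proof -
    note r = row[OF iN]
    define R where "R = (\<Sum>j\<in>{1..N} - MM. A i j)"
    have sA: "(\<Sum>j\<in>{1..N}. A i j) = R + (\<Sum>j\<in>MM. A i j)"
      unfolding R_def using sum.subset_diff[OF MMsub, of "A i"] by simp
    have "A\<delta> i = (\<Sum>j\<in>{1..N} - MM. A i j * \<delta> j) + (\<Sum>j\<in>MM. A i j * \<delta> j)"
      unfolding A\<delta>_def using sum.subset_diff[OF MMsub, of "\<lambda>j. A i j * \<delta> j"] by simp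
    also have "(\<Sum>j\<in>MM. A i j * \<delta> j) = \<delta>M * (\<Sum>j\<in>MM. A i j)"
      unfolding sum_distrib_left by (rule sum.cong) (auto simp: MM_def)
    also have "(\<Sum>j\<in>{1..N} - MM. A i j * \<delta> j) \<le> \<delta>m * R"
      unfolding R_def sum_distrib_left
    proof (rule sum_mono)
      fix j assume j: "j \<in> {1..N} - MM"
      hence "\<delta> j < \<delta>M" using dle[of j] by (auto simp: MM_def)
      hence "\<delta> j \<le> \<delta>m" using dmge j by auto
      thus "A i j * \<delta> j \<le> \<delta>m * A i j" using r mult_right_mono[of "\<delta> j" "\<delta>m" "A i j"] by (simp add: mult.commute)
    qed
    finally have le: "A\<delta> i \<le> \<delta>M * (\<Sum>j\<in>MM. A i j) + \<delta>m * R" by simp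
    have "(\<Sum>j\<in>MM. A i j) = 1 - R" using sA r by simp
    hence "\<delta>M * (\<Sum>j\<in>MM. A i j) = \<delta>M - \<delta>M * R" by (simp add: right_diff_distrib)
    thus ?thesis using le unfolding R_def by (simp add: algebra_simps)
  qed
  have Rnn: "(\<Sum>j\<in>{1..N} - MM. A i j) \<ge> 0" if "i \<in> {1..N}" for i
    using row[OF that] by (simp add: sum_nonneg)
  have c1': "A\<delta> i \<le> \<delta>M" if "i \<in> {1..N}" for i
  proof -
    have "0 \<le> (\<delta>M - \<delta>m) * (\<Sum>j\<in>{1..N} - MM. A i j)" using dmlt Rnn[OF that] by simp
    thus ?thesis using c1[OF that] by linarith
  qed
  have c2: "A\<delta> i \<ge> 0" if "i \<in> {1..N}" for i
    unfolding A\<delta>_def using row[OF that] delta_nn by (intro sum_nonneg) simp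
  have c3: "Max (A\<delta> ` {1..N}) < \<delta>M" if no: "\<nexists>i. i \<in> {1..N} \<and> Pre i \<union> {i} \<subseteq> MM"
  proof -
    have "A\<delta> i < \<delta>M" if iN: "i \<in> {1..N}" for i
    proof -
      obtain j where j: "j \<in> Pre i \<union> {i}" "j \<notin> MM" using no iN by blast
      have jN: "j \<in> {1..N}" using j(1) Pre_sub[OF iN] iN by blast
      have "A i j > 0" using row[OF iN] j by blast
      also have "A i j \<le> (\<Sum>j\<in>{1..N} - MM. A i j)"
        using row[OF iN] j jN by (intro member_le_sum) auto
      finally have "0 < (\<delta>M - \<delta>m) * (\<Sum>j\<in>{1..N} - MM. A i j)" using dmlt by simp
      thus ?thesis using c1[OF iN] by linarith
    qed
    thus ?thesis using Nne by (simp add: Max_less_iff)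
  qed
  have c4: "Max (A\<delta> ` {1..N}) = \<delta>M" if ex: "\<exists>i. i \<in> {1..N} \<and> Pre i \<union> {i} \<subseteq> MM"
  proof -
    obtain i where i: "i \<in> {1..N}" "Pre i \<union> {i} \<subseteq> MM" using ex by blast
    have "A\<delta> i = (\<Sum>j\<in>{1..N}. A i j * \<delta>M)" unfolding A\<delta>_def
    proof (rule sum.cong)
      fix j assume "j \<in> {1..N}"
      show "A i j * \<delta> j = A i j * \<delta>M"
      proof (cases "j \<in> Pre i \<union> {i}")
        case True thus ?thesis using i(2) by (auto simp: MM_def)
      next
        case False thus ?thesis using row[OF i(1)] by simp
      qed
    qed simp
    also have "\<dots> = \<delta>M" using row[OF i(1)] by (simp add: sum_distrib_right[symmetric])
    finally have "A\<delta> i = \<delta>M" .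
    hence "\<delta>M \<le> Max (A\<delta> ` {1..N})" using i(1) by (metis Max_ge finite_atLeastAtMost finite_imageI imageI)
    moreover have "Max (A\<delta> ` {1..N}) \<le> \<delta>M" using Nne c1' by simp
    ultimately show ?thesis by simp
  qed
  have "(\<forall>i\<in>{1..N}. A\<delta> i \<le> \<delta>M - (\<delta>M - \<delta>m) * (\<Sum>j\<in>{1..N} - MM. A i j))
          \<and> (\<forall>i\<in>{1..N}. A\<delta> i \<ge> 0)
          \<and> ((\<nexists>i. i \<in> {1..N} \<and> Pre i \<union> {i} \<subseteq> MM) \<longrightarrow> Max (A\<delta> ` {1..N}) < \<delta>M)
          \<and> ((\<exists>i. i \<in> {1..N} \<and> Pre i \<union> {i} \<subseteq> MM) \<longrightarrow> Max (A\<delta> ` {1..N}) = \<delta>M)"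
    using c1 c2 c3 c4 by blast
  thus ?thesis unfolding Let_def A\<delta>_def A_def \<delta>m_def L_def MM_def \<delta>M_def .
qed

end
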